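(* Let $m\ge 2$, let $J\subseteq\{1,\dots,m\}$ with $|J|\ge 2$, and let $i,j$ be distinct elements of $J$. Then the matrix $\mathrm{diag}(\theta_{ij}(J),1,1,\dots)\in \mathrm{GL}_\infty(\mathbb S_m)$ belongs to $E_\infty(\mathbb S_m)$. Equivalently (with $n=m+1$ and the identification below), for every $J\subseteq\{1,\dots,n\}$ with $n\in J$, $|J|\ge3$, and distinct $i,j\in J\setminus\{n\}$, the unit $\theta_{ij}(J)\in(1+\mathfrak p_n)^*=\mathrm{GL}_\infty(\mathbb S_{n-1})$ lies in $E_\infty(\mathbb S_{n-1})$.
   Context: $K$ is a field. For $n\ge1$, $\mathbb S_n$ is the $K$-algebra generated by $x_1,\dots,x_n,y_1,\dots,y_n$ subject to $y_ix_i=1$ for all $i$ and $[x_i,y_j]=[x_i,x_j]=[y_i,y_j]=0$ for $i\ne j$. For $i\in\{1,\dots,n\}$ and $s,t\in\mathbb N$ put $E_{st}(i):=x_i^sy_i^t-x_i^{s+1}y_i^{t+1}$ (these satisfy $E_{st}(i)E_{uv}(i)=\delta_{tu}E_{sv}(i)$), $e_i:=E_{00}(i)=1-x_iy_i$, and $e_I:=\prod_{i\in I}e_i$ for $I\subseteq\{1,\dots,n\}$. For $J\subseteq\{1,\dots,n\}$ with $|J|\ge2$ and distinct $i,j\in J$, $\theta_{ij}(J):=(1+(y_i-1)e_{J\setminus\{i\}})(1+(x_j-1)e_{J\setminus\{j\}})$; it is a unit of $\mathbb S_n$. $\mathfrak p_n$ denotes the ideal of $\mathbb S_n$ generated by $e_n$,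 and $(1+\mathfrak p_n)^*$ the group of units of $\mathbb S_n$ lying in $1+\mathfrak p_n$. $\mathbb S_{n-1}$ is identified with the subalgebra of $\mathbb S_n$ generated by $x_1,\dots,x_{n-1},y_1,\dots,y_{n-1}$, and $\mathrm{GL}_\infty(\mathbb S_{n-1})$ is identified with $(1+\mathfrak p_n)^*$ via the group isomorphism $(a_{kl})\mapsto 1+\sum_{k,l}(a_{kl}-\delta_{kl})E_{kl}(n)$. For a ring $A$, $\mathrm{GL}_\infty(A)$ and $E_\infty(A)$ are the stable general linear group and its subgroup generated by elementary matrices $1+aE_{kl}$ ($a\in A$, $k\neq l$). *)

theory Defs
  imports Main
begin

text \<open>
  The Jacobson algebra S_m is presented by generators and relations.  We realise it
  literally: the free associative K-algebra on the letters X i, Y i (1 <= i <= m)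
  is modelled as finitely supported functions from words (letter lists) to K,
  with concatenation (Cauchy) product; S_m is its quotient by the two-sided ideal
  generated by the defining relations.  Elements of S_m are handled through
  representatives, and equality in S_m is congruence modulo that ideal.
\<close>

datatype letter = X nat | Y nat

type_synonym 'k fa = "letter list \<Rightarrow> 'k"

definition fa_zero :: "'k::field fa" where
  "fa_zero = (\<lambda>w. 0)"

definition fa_one :: "'k::field fa" where
  "fa_one = (\<lambda>w. if w = [] then 1 else 0)"

definition fa_gen :: "letter \<Rightarrow> 'k::field fa" where
  "fa_gen c = (\<lambda>w. if w = [c] then 1 else 0)"

definition fa_add :: "'k::field fa \<Rightarrow> 'k fa \<Rightarrow> 'k fa" where
  "fa_add a b = (\<lambda>w. a w + b w)"

definition fa_sub :: "'k::field fa \<Rightarrow> 'k fa \<Rightarrow> 'k fa" where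
  "fa_sub a b = (\<lambda>w. a w - b w)"

definition fa_mult :: "'k::field fa \<Rightarrow> 'k fa \<Rightarrow> 'k fa" where
  "fa_mult a b = (\<lambda>w. \<Sum>i\<le>length w. a (take i w) * b (drop i w))"

definition letters :: "nat \<Rightarrow> letter set" where
  "letters m = {X i | i. i \<in> {1..m}} \<union> {Y i | i. i \<in> {1..m}}"

definition free_alg :: "nat \<Rightarrow> 'k::field fa set" where
  "free_alg m = {a. finite {w. a w \<noteq> 0} \<and> (\<forall>w. a w \<noteq> 0 \<longrightarrow> set w \<subseteq> letters m)}"

definition fa_comm :: "'k::field fa \<Rightarrow> 'k fa \<Rightarrow> 'k fa" where
  "fa_comm a b = fa_sub (fa_mult a b) (fa_mult b a)"

definition jac_rels :: "nat \<Rightarrow> 'k::field fa set" where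
  "jac_rels m =
     {fa_sub (fa_mult (fa_gen (Y i)) (fa_gen (X i))) fa_one | i. i \<in> {1..m}}
   \<union> {fa_comm (fa_gen (X i)) (fa_gen (Y j)) | i j. i \<in> {1..m} \<and> j \<in> {1..m} \<and> i \<noteq> j}
   \<union> {fa_comm (fa_gen (X i)) (fa_gen (X j)) | i j. i \<in> {1..m} \<and> j \<in> {1..m} \<and> i \<noteq> j}
   \<union> {fa_comm (fa_gen (Y i)) (fa_gen (Y j)) | i j. i \<in> {1..m} \<and> j \<in> {1..m} \<and> i \<noteq> j}"

inductive_set jac_ideal :: "nat \<Rightarrow> 'k::field fa set" for m where
  zero: "fa_zero \<in> jac_ideal m"
| gen: "r \<in> jac_rels m \<Longrightarrow> u \<in> free_alg m \<Longrightarrow> v \<in> free_alg m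
          \<Longrightarrow> fa_mult (fa_mult u r) v \<in> jac_ideal m"
| add: "a \<in> jac_ideal m \<Longrightarrow> b \<in> jac_ideal m \<Longrightarrow> fa_add a b \<in> jac_ideal m"

definition jac_eq :: "nat \<Rightarrow> 'k::field fa \<Rightarrow> 'k fa \<Rightarrow> bool" where
  "jac_eq m a b \<longleftrightarrow> fa_sub a b \<in> jac_ideal m"

text \<open>The elements e_i, e_I, theta_ij(J) (representatives in F_m).  The product e_I is
  taken in increasing order of indices (the e_i commute in S_m, so any order gives
  the same element of S_m).\<close>

definition jac_x :: "nat \<Rightarrow> 'k::field fa" where "jac_x i = fa_gen (X i)"
definition jac_y :: "nat \<Rightarrow> 'k::field fa" where "jac_y i = fa_gen (Y i)"

definition jac_e :: "nat \<Rightarrow> 'k::field fa" where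
  "jac_e i = fa_sub fa_one (fa_mult (jac_x i) (jac_y i))"

definition jac_eI :: "nat set \<Rightarrow> 'k::field fa" where
  "jac_eI I = foldr (\<lambda>i acc. fa_mult (jac_e i) acc) (sorted_list_of_set I) fa_one"

definition jac_theta :: "nat \<Rightarrow> nat \<Rightarrow> nat set \<Rightarrow> 'k::field fa" where
  "jac_theta i j J =
     fa_mult (fa_add fa_one (fa_mult (fa_sub (jac_y i) fa_one) (jac_eI (J - {i}))))
             (fa_add fa_one (fa_mult (fa_sub (jac_x j) fa_one) (jac_eI (J - {j}))))"

text \<open>N x N matrices (indices 0..N-1) with entries in F_m.\<close>

type_synonym 'k fmat = "nat \<Rightarrow> nat \<Rightarrow> 'k fa"

definition mat_one :: "'k::field fmat" where
  "mat_one = (\<lambda>i j. if i = j then fa_one else fa_zero)"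

definition mat_mult :: "nat \<Rightarrow> 'k::field fmat \<Rightarrow> 'k fmat \<Rightarrow> 'k fmat" where
  "mat_mult N A B = (\<lambda>i j w. \<Sum>k<N. fa_mult (A i k) (B k j) w)"

definition elem_mat :: "nat \<Rightarrow> nat \<Rightarrow> 'k::field fa \<Rightarrow> 'k fmat" where
  "elem_mat k l a = (\<lambda>i j. if i = j then fa_one else if i = k \<and> j = l then a else fa_zero)"

definition diag_first :: "'k::field fa \<Rightarrow> 'k fmat" where
  "diag_first u = (\<lambda>i j. if i = j then (if i = 0 then u else fa_one) else fa_zero)"

text \<open>An N x N matrix over S_m (given by representatives) lies in E_N(S_m), the subgroup
  generated by elementary matrices (closed under inverses since
  (1 + a E_kl)^{-1} = 1 - a E_kl), iff it equals, in S_m, a finite product of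
  elementary matrices with entries in S_m.\<close>

definition in_E_N :: "nat \<Rightarrow> nat \<Rightarrow> 'k::field fmat \<Rightarrow> bool" where
  "in_E_N m N A \<longleftrightarrow>
     (\<exists>es :: (nat \<times> nat \<times> 'k fa) list.
        (\<forall>(k, l, a) \<in> set es. k < N \<and> l < N \<and> k \<noteq> l \<and> a \<in> free_alg m) \<and>
        (\<forall>i<N. \<forall>j<N.
           jac_eq m (foldr (\<lambda>(k, l, a) P. mat_mult N (elem_mat k l a) P) es mat_one i j) (A i j)))"

definition diag_in_E_inf :: "nat \<Rightarrow> 'k::field fa \<Rightarrow> bool" where
  "diag_in_E_inf m u \<longleftrightarrow> (\<exists>N\<ge>1. in_E_N m N (diag_first u))"

end

theory Submission
  imports Defs
begin


definition fa_neg :: "'k::field fa \<Rightarrow> 'k fa" where "fa_neg a = (\<lambda>w. - a w)"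
definition sh :: "letter \<Rightarrow> 'k::field fa \<Rightarrow> 'k fa" where "sh c a = (\<lambda>w. a (c#w))"

lemma fa_mult_Nil: "fa_mult a b [] = a [] * b []"
  by (simp add: fa_mult_def)

lemma fa_mult_Cons: "fa_mult a b (c#w) = a [] * b (c#w) + fa_mult (sh c a) b w"
  unfolding fa_mult_def sh_def
  by (simp add: sum.atMost_Suc_shift del: sum.atMost_Suc)

lemma fa_mult_lin: "fa_mult (\<lambda>v. r * f v + g v) c w = r * fa_mult f c w + fa_mult g c w"
  unfolding fa_mult_def by (simp add: sum.distrib sum_distrib_left algebra_simps)

lemma sh_mult: "sh x (fa_mult a b) = (\<lambda>v. a [] * sh x b v + fa_mult (sh x a) b v)"
  by (rule ext) (simp add: sh_def fa_mult_Cons)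

lemma fa_mult_assoc: "fa_mult (fa_mult a b) c = fa_mult a (fa_mult b c)"
proof (rule ext)
  fix w show "fa_mult (fa_mult a b) c w = fa_mult a (fa_mult b c) w"
  proof (induction w arbitrary: a b)
    case Nil thus ?case by (simp add: fa_mult_Nil mult.assoc)
  next
    case (Cons x w)
    have "fa_mult (fa_mult a b) c (x#w) = a [] * b [] * c (x#w) + (a [] * fa_mult (sh x b) c w + fa_mult (fa_mult (sh x a) b) c w)"
      by (simp add: fa_mult_Cons fa_mult_Nil sh_mult fa_mult_lin)
    also have "\<dots> = a [] * b [] * c (x#w) + (a [] * fa_mult (sh x b) c w + fa_mult (sh x a) (fa_mult b c) w)"
      using Cons.IH by simp
    also have "\<dots> = fa_mult a (fa_mult b c) (x#w)"
      by (simp add: fa_mult_Cons fa_mult_Nil algebra_simps)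
    finally show ?case .
  qed
qed

lemma fa_mult_add_left: "fa_mult (fa_add a b) c = fa_add (fa_mult a c) (fa_mult b c)"
  unfolding fa_mult_def fa_add_def by (simp add: sum.distrib algebra_simps)
lemma fa_mult_add_right: "fa_mult c (fa_add a b) = fa_add (fa_mult c a) (fa_mult c b)"
  unfolding fa_mult_def fa_add_def by (simp add: sum.distrib algebra_simps)
lemma fa_mult_sub_left: "fa_mult (fa_sub a b) c = fa_sub (fa_mult a c) (fa_mult b c)"
  unfolding fa_mult_def fa_sub_def by (simp add: sum_subtractf algebra_simps)
lemma fa_mult_sub_right: "fa_mult c (fa_sub a b) = fa_sub (fa_mult c a) (fa_mult c b)"
  unfolding fa_mult_def fa_sub_def by (simp add: sum_subtractf algebra_simps)
lemma fa_mult_neg_left: "fa_mult (fa_neg a) c = fa_neg (fa_mult a c)"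
  unfolding fa_mult_def fa_neg_def by (simp add: sum_negf)
lemma fa_mult_zero_left: "fa_mult fa_zero c = fa_zero"
  unfolding fa_mult_def fa_zero_def by simp
lemma fa_mult_zero_right: "fa_mult c fa_zero = fa_zero"
  unfolding fa_mult_def fa_zero_def by simp

lemma sh_one: "sh c fa_one = fa_zero"
  by (rule ext) (simp add: sh_def fa_one_def fa_zero_def)

lemma fa_mult_one_left: "fa_mult fa_one a = a"
proof (rule ext)
  fix w show "fa_mult fa_one a w = a w"
    by (cases w) (simp_all add: fa_mult_Nil fa_mult_Cons sh_one fa_mult_zero_left, simp_all add: fa_one_def fa_zero_def)
qed

lemma fa_mult_one_right: "fa_mult a fa_one = a"
proof (rule ext)
  fix w show "fa_mult a fa_one w = a w"
  proof (induction w arbitrary: a)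
    case Nil thus ?case by (simp add: fa_mult_Nil fa_one_def)
  next
    case (Cons x w) thus ?case by (simp add: fa_mult_Cons fa_one_def sh_def)
  qed
qed

subsection \<open>free algebra closure\<close>

lemma free_algI: "finite {w. a w \<noteq> 0} \<Longrightarrow> (\<And>w. a w \<noteq> 0 \<Longrightarrow> set w \<subseteq> letters m) \<Longrightarrow> a \<in> free_alg m"
  by (simp add: free_alg_def)

lemma free_alg_fin: "a \<in> free_alg m \<Longrightarrow> finite {w. a w \<noteq> 0}"
  by (simp add: free_alg_def)
lemma free_alg_let: "a \<in> free_alg m \<Longrightarrow> a w \<noteq> 0 \<Longrightarrow> set w \<subseteq> letters m"
  by (simp add: free_alg_def)

lemma free_zero: "fa_zero \<in> free_alg m"
  by (rule free_algI) (simp_all add: fa_zero_def)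
lemma free_one: "fa_one \<in> free_alg m"
proof (rule free_algI)
  show "finite {w. fa_one w \<noteq> (0::'a)}"
    by (rule finite_subset[of _ "{[]}"]) (auto simp: fa_one_def)
qed (auto simp: fa_one_def split: if_splits)
lemma free_gen: "c \<in> letters m \<Longrightarrow> fa_gen c \<in> free_alg m"
proof (rule free_algI)
  show "finite {w. fa_gen c w \<noteq> (0::'a)}"
    by (rule finite_subset[of _ "{[c]}"]) (auto simp: fa_gen_def)
qed (auto simp: fa_gen_def split: if_splits)

lemma free_add: "a \<in> free_alg m \<Longrightarrow> b \<in> free_alg m \<Longrightarrow> fa_add a b \<in> free_alg m"
proof (rule free_algI)
  assume a: "a \<in> free_alg m" and b: "b \<in> free_alg m"
  show "finite {w. fa_add a b w \<noteq> 0}"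
    by (rule finite_subset[of _ "{w. a w \<noteq> 0} \<union> {w. b w \<noteq> 0}"])
       (auto simp: fa_add_def free_alg_fin[OF a] free_alg_fin[OF b])
  fix w assume "fa_add a b w \<noteq> 0"
  then have "a w \<noteq> 0 \<or> b w \<noteq> 0" by (auto simp: fa_add_def)
  then show "set w \<subseteq> letters m" using free_alg_let[OF a] free_alg_let[OF b] by blast
qed
lemma free_sub: "a \<in> free_alg m \<Longrightarrow> b \<in> free_alg m \<Longrightarrow> fa_sub a b \<in> free_alg m"
proof (rule free_algI)
  assume a: "a \<in> free_alg m" and b: "b \<in> free_alg m"
  show "finite {w. fa_sub a b w \<noteq> 0}"
    by (rule finite_subset[of _ "{w. a w \<noteq> 0} \<union> {w. b w \<noteq> 0}"])
       (auto simp: fa_sub_def free_alg_fin[OF a] free_alg_fin[OF b])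
  fix w assume "fa_sub a b w \<noteq> 0"
  then have "a w \<noteq> 0 \<or> b w \<noteq> 0" by (auto simp: fa_sub_def)
  then show "set w \<subseteq> letters m" using free_alg_let[OF a] free_alg_let[OF b] by blast
qed
lemma free_neg: "a \<in> free_alg m \<Longrightarrow> fa_neg a \<in> free_alg m"
  unfolding free_alg_def fa_neg_def by simp

lemma fa_mult_nz: "fa_mult a b w \<noteq> 0 \<Longrightarrow> \<exists>i. a (take i w) \<noteq> 0 \<and> b (drop i w) \<noteq> 0"
  unfolding fa_mult_def by (metis (mono_tags, lifting) mult_eq_0_iff sum.neutral)

lemma free_mult: "a \<in> free_alg m \<Longrightarrow> b \<in> free_alg m \<Longrightarrow> fa_mult a b \<in> free_alg m"
proof (rule free_algI)
  assume a: "a \<in> free_alg m" and b: "b \<in> free_alg m"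
  show "finite {w. fa_mult a b w \<noteq> 0}"
  proof (rule finite_subset[of _ "(\<lambda>(u,v). u@v) ` ({w. a w \<noteq> 0} \<times> {w. b w \<noteq> 0})"])
    show "{w. fa_mult a b w \<noteq> 0} \<subseteq> (\<lambda>(u,v). u@v) ` ({w. a w \<noteq> 0} \<times> {w. b w \<noteq> 0})"
    proof
      fix w assume "w \<in> {w. fa_mult a b w \<noteq> 0}"
      then obtain i where "a (take i w) \<noteq> 0" "b (drop i w) \<noteq> 0" using fa_mult_nz by blast
      then show "w \<in> (\<lambda>(u,v). u@v) ` ({w. a w \<noteq> 0} \<times> {w. b w \<noteq> 0})"
        by (intro image_eqI[of _ _ "(take i w, drop i w)"]) auto
    qed
  qed (simp add: free_alg_fin[OF a] free_alg_fin[OF b])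
  fix w assume "fa_mult a b w \<noteq> 0"
  then obtain i where "a (take i w) \<noteq> 0" "b (drop i w) \<noteq> 0" using fa_mult_nz by blast
  then have "set (take i w) \<subseteq> letters m" "set (drop i w) \<subseteq> letters m"
    using free_alg_let[OF a] free_alg_let[OF b] by auto
  then show "set w \<subseteq> letters m"
    by (metis append_take_drop_id set_append Un_subset_iff)
qed

subsection \<open>ideal\<close>

lemma I_neg: "a \<in> jac_ideal m \<Longrightarrow> fa_neg a \<in> jac_ideal m"
proof (induction rule: jac_ideal.induct)
  case zero
  have "fa_neg fa_zero = (fa_zero :: 'a fa)" by (simp add: fa_neg_def fa_zero_def)
  then show ?case by (simp add: jac_ideal.zero)
next
  case (gen r u v)
  have "fa_neg (fa_mult (fa_mult u r) v) = fa_mult (fa_mult (fa_neg u) r) v"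
    by (simp add: fa_mult_neg_left)
  then show ?case using gen by (simp add: jac_ideal.gen free_neg)
next
  case (add a b)
  have "fa_neg (fa_add a b) = fa_add (fa_neg a) (fa_neg b)" by (simp add: fa_neg_def fa_add_def)
  then show ?case using add by (simp add: jac_ideal.add)
qed

lemma I_lmult: "a \<in> jac_ideal m \<Longrightarrow> c \<in> free_alg m \<Longrightarrow> fa_mult c a \<in> jac_ideal m"
proof (induction rule: jac_ideal.induct)
  case zero then show ?case by (simp add: fa_mult_zero_right jac_ideal.zero)
next
  case (gen r u v)
  have "fa_mult c (fa_mult (fa_mult u r) v) = fa_mult (fa_mult (fa_mult c u) r) v"
    by (simp add: fa_mult_assoc)
  then show ?case using gen by (simp add: jac_ideal.gen free_mult)
next
  case (add a b) then show ?case by (simp add: fa_mult_add_right jac_ideal.add)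
qed

lemma I_rmult: "a \<in> jac_ideal m \<Longrightarrow> c \<in> free_alg m \<Longrightarrow> fa_mult a c \<in> jac_ideal m"
proof (induction rule: jac_ideal.induct)
  case zero then show ?case by (simp add: fa_mult_zero_left jac_ideal.zero)
next
  case (gen r u v)
  have "fa_mult (fa_mult (fa_mult u r) v) c = fa_mult (fa_mult u r) (fa_mult v c)"
    by (simp add: fa_mult_assoc)
  then show ?case using gen by (simp add: jac_ideal.gen free_mult)
next
  case (add a b) then show ?case by (simp add: fa_mult_add_left jac_ideal.add)
qed

lemma I_rel: "r \<in> jac_rels m \<Longrightarrow> r \<in> jac_ideal m"
  using jac_ideal.gen[of r m fa_one fa_one] by (simp add: free_one fa_mult_one_left fa_mult_one_right)

lemma I_eqzero: "a = fa_zero \<Longrightarrow> a \<in> jac_ideal m" by (simp add: jac_ideal.zero)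

lemma jeq_refl: "jac_eq m a a"
  unfolding jac_eq_def by (rule I_eqzero) (simp add: fa_sub_def fa_zero_def)
lemma jeq_eq: "a = b \<Longrightarrow> jac_eq m a b" by (simp add: jeq_refl)
lemma jeq_sym: "jac_eq m a b \<Longrightarrow> jac_eq m b a"
proof -
  assume "jac_eq m a b"
  then have "fa_neg (fa_sub a b) \<in> jac_ideal m" unfolding jac_eq_def by (rule I_neg)
  moreover have "fa_neg (fa_sub a b) = fa_sub b a" by (simp add: fa_neg_def fa_sub_def)
  ultimately show ?thesis by (simp add: jac_eq_def)
qed
lemma jeq_trans: "jac_eq m a b \<Longrightarrow> jac_eq m b c \<Longrightarrow> jac_eq m a c"
proof -
  assume "jac_eq m a b" "jac_eq m b c"
  then have "fa_add (fa_sub a b) (fa_sub b c) \<in> jac_ideal m" unfolding jac_eq_def by (rule jac_ideal.add)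
  moreover have "fa_add (fa_sub a b) (fa_sub b c) = fa_sub a c" by (simp add: fa_add_def fa_sub_def)
  ultimately show ?thesis by (simp add: jac_eq_def)
qed
lemma jeq_add: "jac_eq m a b \<Longrightarrow> jac_eq m c d \<Longrightarrow> jac_eq m (fa_add a c) (fa_add b d)"
proof -
  assume "jac_eq m a b" "jac_eq m c d"
  then have "fa_add (fa_sub a b) (fa_sub c d) \<in> jac_ideal m" unfolding jac_eq_def by (rule jac_ideal.add)
  moreover have "fa_add (fa_sub a b) (fa_sub c d) = fa_sub (fa_add a c) (fa_add b d)" by (simp add: fa_add_def fa_sub_def algebra_simps)
  ultimately show ?thesis by (simp add: jac_eq_def)
qed
lemma jeq_neg: "jac_eq m a b \<Longrightarrow> jac_eq m (fa_neg a) (fa_neg b)"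
proof -
  assume "jac_eq m a b"
  then have "fa_neg (fa_sub a b) \<in> jac_ideal m" unfolding jac_eq_def by (rule I_neg)
  moreover have "fa_neg (fa_sub a b) = fa_sub (fa_neg a) (fa_neg b)" by (simp add: fa_neg_def fa_sub_def)
  ultimately show ?thesis by (simp add: jac_eq_def)
qed
lemma jeq_sub: "jac_eq m a b \<Longrightarrow> jac_eq m c d \<Longrightarrow> jac_eq m (fa_sub a c) (fa_sub b d)"
proof -
  assume "jac_eq m a b" "jac_eq m c d"
  then have "fa_add (fa_sub a b) (fa_neg (fa_sub c d)) \<in> jac_ideal m" unfolding jac_eq_def
    by (intro jac_ideal.add I_neg)
  moreover have "fa_add (fa_sub a b) (fa_neg (fa_sub c d)) = fa_sub (fa_sub a c) (fa_sub b d)"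
    by (simp add: fa_add_def fa_sub_def fa_neg_def algebra_simps)
  ultimately show ?thesis by (simp add: jac_eq_def)
qed
lemma jeq_mult: "jac_eq m a b \<Longrightarrow> jac_eq m c d \<Longrightarrow> b \<in> free_alg m \<Longrightarrow> c \<in> free_alg m
   \<Longrightarrow> jac_eq m (fa_mult a c) (fa_mult b d)"
proof -
  assume h: "jac_eq m a b" "jac_eq m c d" "b \<in> free_alg m" "c \<in> free_alg m"
  then have "fa_add (fa_mult (fa_sub a b) c) (fa_mult b (fa_sub c d)) \<in> jac_ideal m" unfolding jac_eq_def
    by (intro jac_ideal.add I_rmult I_lmult)
  moreover have "fa_add (fa_mult (fa_sub a b) c) (fa_mult b (fa_sub c d)) = fa_sub (fa_mult a c) (fa_mult b d)"
    by (simp add: fa_mult_sub_left fa_mult_sub_right) (simp add: fa_add_def fa_sub_def)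
  ultimately show ?thesis by (simp add: jac_eq_def)
qed

lemma I0: "a \<in> jac_ideal 0 \<Longrightarrow> a = fa_zero"
proof (induction rule: jac_ideal.induct)
  case zero then show ?case by simp
next
  case (gen r u v) then show ?case by (simp add: jac_rels_def)
next
  case (add a b) then show ?case by (simp add: fa_add_def fa_zero_def)
qed



definition pdom :: "(nat \<Rightarrow> 'k::field fa) \<Rightarrow> bool" where
  "pdom f \<longleftrightarrow> (\<forall>m. f m \<in> free_alg m)"

definition qrel :: "(nat \<Rightarrow> 'k::field fa) \<Rightarrow> (nat \<Rightarrow> 'k fa) \<Rightarrow> bool" where
  "qrel f g \<longleftrightarrow> pdom f \<and> pdom g \<and> (\<forall>m. jac_eq m (f m) (g m))"

lemma qrel_part_equivp: "part_equivp (qrel :: (nat \<Rightarrow> 'k::field fa) \<Rightarrow> _)"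
proof (rule part_equivpI)
  show "\<exists>x::nat \<Rightarrow> 'k fa. qrel x x"
    by (rule exI[of _ "\<lambda>m. fa_zero"]) (simp add: qrel_def pdom_def free_zero jeq_refl)
  show "symp (qrel :: (nat \<Rightarrow> 'k::field fa) \<Rightarrow> _)"
    by (auto simp: symp_def qrel_def intro: jeq_sym)
  show "transp (qrel :: (nat \<Rightarrow> 'k::field fa) \<Rightarrow> _)"
    by (auto simp: transp_def qrel_def intro: jeq_trans)
qed

quotient_type (overloaded) 'k qs = "nat \<Rightarrow> ('k::field) fa" / partial: qrel
  by (rule qrel_part_equivp)

definition padd :: "(nat \<Rightarrow> 'k::field fa) \<Rightarrow> _ \<Rightarrow> _" where "padd f g = (\<lambda>m. fa_add (f m) (g m))"
definition psub :: "(nat \<Rightarrow> 'k::field fa) \<Rightarrow> _ \<Rightarrow> _" where "psub f g = (\<lambda>m. fa_sub (f m) (g m))"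
definition pmul :: "(nat \<Rightarrow> 'k::field fa) \<Rightarrow> _ \<Rightarrow> _" where "pmul f g = (\<lambda>m. fa_mult (f m) (g m))"
definition pneg :: "(nat \<Rightarrow> 'k::field fa) \<Rightarrow> _" where "pneg f = (\<lambda>m. fa_neg (f m))"
definition pone :: "nat \<Rightarrow> 'k::field fa" where "pone = (\<lambda>m. fa_one)"
definition pzero :: "nat \<Rightarrow> 'k::field fa" where "pzero = (\<lambda>m. fa_zero)"

lemma pdom_ops:
  "pdom f \<Longrightarrow> pdom g \<Longrightarrow> pdom (padd f g)"
  "pdom f \<Longrightarrow> pdom g \<Longrightarrow> pdom (psub f g)"
  "pdom f \<Longrightarrow> pdom g \<Longrightarrow> pdom (pmul f g)"
  "pdom f \<Longrightarrow> pdom (pneg f)"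
  "pdom pone" "pdom pzero"
  by (simp_all add: pdom_def padd_def psub_def pmul_def pneg_def pone_def pzero_def
      free_add free_sub free_mult free_neg free_one free_zero)

lemma qrel_refl: "pdom f \<Longrightarrow> qrel f f" by (simp add: qrel_def jeq_refl)
lemma qrel_eqI: "pdom f \<Longrightarrow> f = g \<Longrightarrow> qrel f g" by (simp add: qrel_refl)

instantiation qs :: (field) ring_1
begin
lift_definition zero_qs :: "'a qs" is pzero by (simp add: qrel_refl pdom_ops)
lift_definition one_qs :: "'a qs" is pone by (simp add: qrel_refl pdom_ops)
lift_definition plus_qs :: "'a qs \<Rightarrow> 'a qs \<Rightarrow> 'a qs" is padd
  unfolding qrel_def pdom_def padd_def rel_fun_def by (auto intro: jeq_add free_add)
lift_definition minus_qs :: "'a qs \<Rightarrow> 'a qs \<Rightarrow> 'a qs" is psub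
  unfolding qrel_def pdom_def psub_def rel_fun_def by (auto intro: jeq_sub free_sub)
lift_definition uminus_qs :: "'a qs \<Rightarrow> 'a qs" is pneg
  unfolding qrel_def pdom_def pneg_def rel_fun_def by (auto intro: jeq_neg free_neg)
lift_definition times_qs :: "'a qs \<Rightarrow> 'a qs \<Rightarrow> 'a qs" is pmul
  unfolding qrel_def pdom_def pmul_def rel_fun_def by (auto intro: jeq_mult free_mult)
instance
proof
  fix a b c :: "'a qs"
  show "a + b + c = a + (b + c)"
    by transfer (rule qrel_eqI, (auto simp: qrel_def intro!: pdom_ops)[1], rule ext, simp add: padd_def fa_add_def add.assoc)
  show "a + b = b + a"
    by transfer (rule qrel_eqI, (auto simp: qrel_def intro!: pdom_ops)[1], rule ext, simp add: padd_def fa_add_def add.commute)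
  show "0 + a = a"
    by transfer (rule qrel_eqI, (auto simp: qrel_def intro!: pdom_ops)[1], rule ext, simp add: padd_def fa_add_def pzero_def fa_zero_def)
  show "- a + a = 0"
    by transfer (rule qrel_eqI, (auto simp: qrel_def intro!: pdom_ops)[1], rule ext, simp add: padd_def fa_add_def pzero_def fa_zero_def pneg_def fa_neg_def)
  show "a - b = a + - b"
    by transfer (rule qrel_eqI, (auto simp: qrel_def intro!: pdom_ops)[1], rule ext, simp add: padd_def fa_add_def psub_def fa_sub_def pneg_def fa_neg_def)
  show "a * b * c = a * (b * c)"
    by transfer (rule qrel_eqI, (auto simp: qrel_def intro!: pdom_ops)[1], rule ext, simp add: pmul_def fa_mult_assoc)
  show "1 * a = a"
    by transfer (rule qrel_eqI, (auto simp: qrel_def intro!: pdom_ops)[1], rule ext, simp add: pmul_def pone_def fa_mult_one_left)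
  show "a * 1 = a"
    by transfer (rule qrel_eqI, (auto simp: qrel_def intro!: pdom_ops)[1], rule ext, simp add: pmul_def pone_def fa_mult_one_right)
  show "(a + b) * c = a * c + b * c"
    by transfer (rule qrel_eqI, (auto simp: qrel_def intro!: pdom_ops)[1], rule ext, simp add: pmul_def padd_def fa_mult_add_left)
  show "a * (b + c) = a * b + a * c"
    by transfer (rule qrel_eqI, (auto simp: qrel_def intro!: pdom_ops)[1], rule ext, simp add: pmul_def padd_def fa_mult_add_right)
  show "(0::'a qs) \<noteq> 1"
  proof transfer
    have "\<not> jac_eq 0 (fa_zero::'a fa) fa_one"
    proof
      assume "jac_eq 0 (fa_zero::'a fa) fa_one"
      then have "fa_sub (fa_zero::'a fa) fa_one = fa_zero" unfolding jac_eq_def by (rule I0)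
      then have "fa_sub (fa_zero::'a fa) fa_one [] = fa_zero []" by simp
      then show False by (simp add: fa_sub_def fa_zero_def fa_one_def)
    qed
    then show "\<not> qrel (pzero::nat \<Rightarrow> 'a fa) pone" by (auto simp: qrel_def pzero_def pone_def)
  qed
qed
end



lemma rsp_mul: "qrel f f' \<Longrightarrow> qrel g g' \<Longrightarrow> qrel (pmul f g) (pmul f' g')"
  unfolding qrel_def pdom_def pmul_def by (auto intro: jeq_mult free_mult)
lemma rsp_add: "qrel f f' \<Longrightarrow> qrel g g' \<Longrightarrow> qrel (padd f g) (padd f' g')"
  unfolding qrel_def pdom_def padd_def by (auto intro: jeq_add free_add)
lemma rsp_sub: "qrel f f' \<Longrightarrow> qrel g g' \<Longrightarrow> qrel (psub f g) (psub f' g')"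
  unfolding qrel_def pdom_def psub_def by (auto intro: jeq_sub free_sub)
lemma rsp_neg: "qrel f f' \<Longrightarrow> qrel (pneg f) (pneg f')"
  unfolding qrel_def pdom_def pneg_def by (auto intro: jeq_neg free_neg)

lemmas QQ = Quotient_qs
lemma rep_abs: "pdom f \<Longrightarrow> qrel (rep_qs (abs_qs f)) f"
  by (rule Quotient_rep_abs[OF QQ]) (rule qrel_refl)

lemma abs_mul: "pdom f \<Longrightarrow> pdom g \<Longrightarrow> abs_qs (pmul f g) = abs_qs f * abs_qs g"
  unfolding times_qs_def map_fun_def comp_def id_def
  by (rule Quotient_rel_abs[OF QQ], rule rsp_mul; rule Quotient_symp[OF QQ, THEN sympD]; rule rep_abs)
lemma abs_add: "pdom f \<Longrightarrow> pdom g \<Longrightarrow> abs_qs (padd f g) = abs_qs f + abs_qs g"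
  unfolding plus_qs_def map_fun_def comp_def id_def
  by (rule Quotient_rel_abs[OF QQ], rule rsp_add; rule Quotient_symp[OF QQ, THEN sympD]; rule rep_abs)
lemma abs_sub: "pdom f \<Longrightarrow> pdom g \<Longrightarrow> abs_qs (psub f g) = abs_qs f - abs_qs g"
  unfolding minus_qs_def map_fun_def comp_def id_def
  by (rule Quotient_rel_abs[OF QQ], rule rsp_sub; rule Quotient_symp[OF QQ, THEN sympD]; rule rep_abs)
lemma abs_neg: "pdom f \<Longrightarrow> abs_qs (pneg f) = - abs_qs f"
  unfolding uminus_qs_def map_fun_def comp_def id_def
  by (rule Quotient_rel_abs[OF QQ], rule rsp_neg; rule Quotient_symp[OF QQ, THEN sympD]; rule rep_abs)
lemma abs_one: "abs_qs pone = 1" unfolding one_qs_def by simp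
lemma abs_zero: "abs_qs pzero = 0" unfolding zero_qs_def by simp

lemma abs_eqD: "pdom f \<Longrightarrow> pdom g \<Longrightarrow> abs_qs f = abs_qs g \<Longrightarrow> jac_eq m (f m) (g m)"
  using Quotient_rel[OF QQ, of f g] qrel_refl unfolding qrel_def by blast

definition xf :: "nat \<Rightarrow> nat \<Rightarrow> 'k::field fa" where
  "xf i = (\<lambda>m. if i \<in> {1..m} then jac_x i else fa_one)"
definition yf :: "nat \<Rightarrow> nat \<Rightarrow> 'k::field fa" where
  "yf i = (\<lambda>m. if i \<in> {1..m} then jac_y i else fa_one)"

lemma pdom_xf: "pdom (xf i)" and pdom_yf: "pdom (yf i)"
  unfolding pdom_def xf_def yf_def jac_x_def jac_y_def
  by (auto intro!: free_gen free_one simp: letters_def)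

definition xq :: "nat \<Rightarrow> 'k::field qs" where "xq i = abs_qs (xf i)"
definition yq :: "nat \<Rightarrow> 'k::field qs" where "yq i = abs_qs (yf i)"

lemma qeqI: "pdom f \<Longrightarrow> pdom g \<Longrightarrow> (\<And>m. jac_eq m (f m) (g m)) \<Longrightarrow> abs_qs f = abs_qs g"
  by (rule Quotient_rel_abs[OF QQ]) (simp add: qrel_def)

lemma rel_yx: assumes "1 \<le> i" shows "yq i * xq i = (1 :: 'k::field qs)"
proof -
  have "abs_qs (pmul (yf i) (xf i)) = (abs_qs pone :: 'k qs)"
  proof (rule qeqI)
    fix m
    show "jac_eq m (pmul (yf i) (xf i) m) (pone m :: 'k fa)"
    proof (cases "i \<le> m")
      case True
      have "fa_sub (fa_mult (fa_gen (Y i)) (fa_gen (X i))) fa_one \<in> (jac_rels m :: 'k fa set)"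
        using True assms unfolding jac_rels_def by auto
      then show ?thesis using True assms
        by (simp add: pmul_def pone_def xf_def yf_def jac_x_def jac_y_def jac_eq_def I_rel)
    next
      case False then show ?thesis
        by (simp add: pmul_def pone_def xf_def yf_def fa_mult_one_left jeq_refl)
    qed
  qed (simp_all add: pdom_ops pdom_xf pdom_yf)
  then show ?thesis by (simp add: abs_mul pdom_xf pdom_yf xq_def yq_def abs_one)
qed

lemma comm_gen:
  assumes "\<And>m. i \<in> {1..m} \<Longrightarrow> j \<in> {1..m} \<Longrightarrow> jac_eq m (fa_mult (a::'k::field fa) b) (fa_mult b a)"
    and "pdom f" "pdom g"
    and "\<And>m. f m = (if i \<in> {1..m} then a else fa_one)" "\<And>m. g m = (if j \<in> {1..m} then b else fa_one)"
  shows "abs_qs f * abs_qs g = abs_qs g * abs_qs f"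
proof -
  have "abs_qs (pmul f g) = abs_qs (pmul g f)"
  proof (rule qeqI)
    fix m show "jac_eq m (pmul f g m) (pmul g f m)"
      using assms(1)[of m] by (simp add: assms(4,5) pmul_def fa_mult_one_left fa_mult_one_right jeq_refl)
  qed (simp_all add: pdom_ops assms)
  then show ?thesis by (simp add: abs_mul assms)
qed

lemma rel_comm:
  assumes "i \<noteq> j"
  shows "xq i * yq j = yq j * (xq i :: 'k::field qs)"
    and "xq i * xq j = xq j * (xq i :: 'k::field qs)"
    and "yq i * yq j = yq j * (yq i :: 'k::field qs)"
proof -
  show "xq i * yq j = yq j * (xq i :: 'k::field qs)" unfolding xq_def yq_def
  proof (rule comm_gen[where a="jac_x i" and b="jac_y j"])
    fix m assume "i \<in> {1..m}" "j \<in> {1..m}"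
    then have "fa_comm (fa_gen (X i)) (fa_gen (Y j)) \<in> (jac_rels m :: 'k fa set)"
      using assms unfolding jac_rels_def by blast
    then show "jac_eq m (fa_mult (jac_x i) (jac_y j)) (fa_mult (jac_y j) (jac_x i) :: 'k fa)"
      by (simp add: jac_eq_def fa_comm_def jac_x_def jac_y_def I_rel)
  qed (fact pdom_xf pdom_yf | simp add: xf_def yf_def)+
  show "xq i * xq j = xq j * (xq i :: 'k::field qs)" unfolding xq_def
  proof (rule comm_gen[where a="jac_x i" and b="jac_x j"])
    fix m assume "i \<in> {1..m}" "j \<in> {1..m}"
    then have "fa_comm (fa_gen (X i)) (fa_gen (X j)) \<in> (jac_rels m :: 'k fa set)"
      using assms unfolding jac_rels_def by blast
    then show "jac_eq m (fa_mult (jac_x i) (jac_x j)) (fa_mult (jac_x j) (jac_x i) :: 'k fa)"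
      by (simp add: jac_eq_def fa_comm_def jac_x_def I_rel)
  qed (fact pdom_xf | simp add: xf_def)+
  show "yq i * yq j = yq j * (yq i :: 'k::field qs)" unfolding yq_def
  proof (rule comm_gen[where a="jac_y i" and b="jac_y j"])
    fix m assume "i \<in> {1..m}" "j \<in> {1..m}"
    then have "fa_comm (fa_gen (Y i)) (fa_gen (Y j)) \<in> (jac_rels m :: 'k fa set)"
      using assms unfolding jac_rels_def by blast
    then show "jac_eq m (fa_mult (jac_y i) (jac_y j)) (fa_mult (jac_y j) (jac_y i) :: 'k fa)"
      by (simp add: jac_eq_def fa_comm_def jac_y_def I_rel)
  qed (fact pdom_yf | simp add: yf_def)+
qed



type_synonym 'r m3 = "nat \<Rightarrow> nat \<Rightarrow> 'r"

definition qmult :: "'r::ring_1 m3 \<Rightarrow> 'r m3 \<Rightarrow> 'r m3" where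
  "qmult A B = (\<lambda>i j. \<Sum>k<3. A i k * B k j)"
definition qelem :: "nat \<Rightarrow> nat \<Rightarrow> 'r::ring_1 \<Rightarrow> 'r m3" where
  "qelem k l a = (\<lambda>i j. if i = j then 1 else if i = k \<and> j = l then a else 0)"
definition qstep :: "nat \<times> nat \<times> 'r::ring_1 \<Rightarrow> 'r m3 \<Rightarrow> 'r m3" where
  "qstep t P = (case t of (k,l,a) \<Rightarrow> qmult (qelem k l a) P)"
definition eq3 :: "'r m3 \<Rightarrow> 'r m3 \<Rightarrow> bool" where
  "eq3 A B \<longleftrightarrow> (\<forall>i<3. \<forall>j<3. A i j = B i j)"

lemma sum3: "(\<Sum>k<3::nat. f k) = f 0 + f 1 + f 2"
  by (simp add: eval_nat_numeral)

lemma less3: "(i::nat) < 3 \<longleftrightarrow> i = 0 \<or> i = 1 \<or> i = 2" by auto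

definition Ml :: "'r::ring_1 \<Rightarrow> 'r \<Rightarrow> 'r \<Rightarrow> nat \<Rightarrow> nat \<Rightarrow> (nat \<times> nat \<times> 'r) list" where
  "Ml p a b s t = [(s,t,p*a),(t,s,-(p*b)),(s,t,p*a),(s,t,-p),(t,s,p),(s,t,-p)]"
definition Mil :: "'r::ring_1 \<Rightarrow> 'r \<Rightarrow> 'r \<Rightarrow> nat \<Rightarrow> nat \<Rightarrow> (nat \<times> nat \<times> 'r) list" where
  "Mil p a b s t = [(s,t,p),(t,s,-p),(s,t,p),(s,t,-(p*a)),(t,s,p*b),(s,t,-(p*a))]"

lemma M01:
  fixes p a b :: "'r::ring_1"
  assumes ab: "a*b = 1" and pp: "p*p = p" and pa: "p*a = a*p" and pb: "p*b=b*p"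
  shows "eq3 (foldr qstep (Ml p a b 0 1) P)
    (qmult (\<lambda>i j. if i=0 \<and> j=0 then 1 + p*(a-1) else if i=1\<and>j=0 then p*(1-b*a)
          else if i=1\<and>j=1 then 1+p*(b-1) else if i = j then 1 else 0) P)"
proof -
  have r1: "a*(b*z) = z" for z by (metis ab mult.assoc mult_1)
  have r2: "p*(p*z) = p*z" for z by (metis pp mult.assoc)
  have r3: "a*(p*z) = p*(a*z)" for z by (metis pa mult.assoc)
  have r4: "b*(p*z) = p*(b*z)" for z by (metis pb mult.assoc)
  show ?thesis
  unfolding eq3_def less3
  by (auto simp: Ml_def qstep_def qmult_def qelem_def sum3 algebra_simps ab pp r1 r2 r3 r4 pa[symmetric] pb[symmetric])
qed

definition MM :: "'r::ring_1 \<Rightarrow> 'r \<Rightarrow> 'r \<Rightarrow> nat \<Rightarrow> 'r m3" where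
  "MM p a b t = (\<lambda>i j. if i=0 \<and> j=0 then 1 + p*(a-1) else if i=t\<and>j=0 then p*(1-b*a)
          else if i=t\<and>j=t then 1+p*(b-1) else if i = j then 1 else 0)"
definition MMi :: "'r::ring_1 \<Rightarrow> 'r \<Rightarrow> 'r \<Rightarrow> nat \<Rightarrow> 'r m3" where
  "MMi p a b t = (\<lambda>i j. if i=0 \<and> j=0 then 1 + p*(b-1) else if i=0\<and>j=t then p*(1-b*a)
          else if i=t\<and>j=t then 1+p*(a-1) else if i = j then 1 else 0)"

lemma Mgen:
  fixes p a b :: "'r::ring_1"
  assumes ab: "a*b = 1" and pp: "p*p = p" and pa: "p*a = a*p" and pb: "p*b=b*p"
    and t: "t = 1 \<or> t = 2"
  shows "eq3 (foldr qstep (Ml p a b 0 t) P) (qmult (MM p a b t) P)"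
    and "eq3 (foldr qstep (Mil p a b 0 t) P) (qmult (MMi p a b t) P)"
proof -
  have r1: "a*(b*z) = z" for z by (metis ab mult.assoc mult_1)
  have r2: "p*(p*z) = p*z" for z by (metis pp mult.assoc)
  have r3: "a*(p*z) = p*(a*z)" for z by (metis pa mult.assoc)
  have r4: "b*(p*z) = p*(b*z)" for z by (metis pb mult.assoc)
  show "eq3 (foldr qstep (Ml p a b 0 t) P) (qmult (MM p a b t) P)"
  using t unfolding eq3_def less3
  by (auto simp: Ml_def MM_def qstep_def qmult_def qelem_def sum3 algebra_simps ab pp r1 r2 r3 r4 pa[symmetric] pb[symmetric])
  show "eq3 (foldr qstep (Mil p a b 0 t) P) (qmult (MMi p a b t) P)"
  using t unfolding eq3_def less3
  by (auto simp: Mil_def MMi_def qstep_def qmult_def qelem_def sum3 algebra_simps ab pp r1 r2 r3 r4 pa[symmetric] pb[symmetric])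
qed

lemma final_prod:
  fixes p x1 y1 x2 y2 :: "'r::ring_1"
  assumes a1: "y1*x1 = 1" and a2: "y2*x2 = 1" and pp: "p*p = p"
    and c1: "x1*p = p*x1" "y1*p = p*y1" "x2*p = p*x2" "y2*p = p*y2"
    and c2: "x2*x1 = x1*x2" "x2*y1 = y1*x2" "y2*x1 = x1*y2" "y2*y1 = y1*y2"
  shows "eq3 (qmult (MMi p y2 x2 1) (qmult (MMi p y1 x1 2) (qmult (MM p y2 x2 1) (MM p y1 x1 2))))
     (\<lambda>i j. if i = j then (if i = 0 then (1 + (y1 - 1) * ((1 - x2*y2) * p)) * (1 + (x2 - 1) * ((1 - x1*y1) * p)) else 1) else 0)"
proof -
  have r1: "y1*(x1*z) = z" "y2*(x2*z) = z" for z by (metis a1 a2 mult.assoc mult_1)+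
  have r2: "p*(p*z) = p*z" for z by (metis pp mult.assoc)
  have r3: "x1*(p*z) = p*(x1*z)" "y1*(p*z) = p*(y1*z)" "x2*(p*z) = p*(x2*z)" "y2*(p*z) = p*(y2*z)" for z
    by (metis c1 mult.assoc)+
  have r4: "x2*(x1*z) = x1*(x2*z)" "x2*(y1*z) = y1*(x2*z)" "y2*(x1*z) = x1*(y2*z)" "y2*(y1*z) = y1*(y2*z)" for z
    by (metis c2 mult.assoc)+
  show ?thesis
  unfolding eq3_def less3
  by (auto simp: MM_def MMi_def qmult_def sum3 algebra_simps a1 a2 pp c1 c2 r1 r2 r3 r4)
qed



subsection \<open>idempotents e_k in qs\<close>

definition eq :: "nat \<Rightarrow> 'k::field qs" where "eq k = 1 - xq k * yq k"
definition eIq :: "nat set \<Rightarrow> 'k::field qs" where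
  "eIq S = foldr (\<lambda>k acc. eq k * acc) (sorted_list_of_set S) 1"

lemma eq_idem: "1 \<le> k \<Longrightarrow> eq k * eq k = (eq k :: 'k::field qs)"
proof -
  assume k: "1 \<le> k"
  have "xq k * yq k * (xq k * yq k) = (xq k * yq k :: 'k qs)"
    by (metis mult.assoc mult_1 rel_yx[OF k])
  then show ?thesis by (simp add: eq_def algebra_simps)
qed

lemma eq_comm: "z * xq k = xq k * z \<Longrightarrow> z * yq k = yq k * z \<Longrightarrow> z * eq k = eq k * (z :: 'k::field qs)"
  unfolding eq_def by (simp add: algebra_simps) (metis mult.assoc)

lemma x_eq_comm: "k \<noteq> l \<Longrightarrow> xq l * eq k = eq k * (xq l :: 'k::field qs)"
  by (rule eq_comm) (simp_all add: rel_comm)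
lemma y_eq_comm: "k \<noteq> l \<Longrightarrow> yq l * eq k = eq k * (yq l :: 'k::field qs)"
  by (rule eq_comm) (metis rel_comm)+
lemma eq_eq_comm: "k \<noteq> l \<Longrightarrow> eq l * eq k = eq k * (eq l :: 'k::field qs)"
  by (rule eq_comm) (metis x_eq_comm y_eq_comm)+

lemma foldr_comm:
  assumes "\<And>k. k \<in> set ks \<Longrightarrow> z * eq k = eq k * (z :: 'k::field qs)"
  shows "z * foldr (\<lambda>k acc. eq k * acc) ks 1 = foldr (\<lambda>k acc. eq k * acc) ks 1 * z"
  using assms
proof (induction ks)
  case Nil then show ?case by simp
next
  case (Cons a ks)
  have "z * (eq a * foldr (\<lambda>k acc. eq k * acc) ks 1) = eq a * (z * foldr (\<lambda>k acc. eq k * acc) ks 1)"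
    using Cons.prems[of a] by (simp add: mult.assoc[symmetric])
  also have "\<dots> = eq a * foldr (\<lambda>k acc. eq k * acc) ks 1 * z"
    using Cons by (simp add: mult.assoc)
  finally show ?case by simp
qed

lemma eIq_comm:
  assumes "finite S" "\<And>k. k \<in> S \<Longrightarrow> z * eq k = eq k * (z :: 'k::field qs)"
  shows "z * eIq S = eIq S * z"
  unfolding eIq_def by (rule foldr_comm) (simp add: assms)

lemma foldr_idem:
  assumes "distinct ks" "\<And>k. k \<in> set ks \<Longrightarrow> 1 \<le> k"
  shows "foldr (\<lambda>k acc. eq k * acc) ks 1 * foldr (\<lambda>k acc. eq k * acc) ks 1 = (foldr (\<lambda>k acc. eq k * acc) ks 1 :: 'k::field qs)"
  using assms
proof (induction ks)
  case Nil then show ?case by simp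
next
  case (Cons a ks)
  let ?F = "foldr (\<lambda>k acc. eq k * acc) ks 1 :: 'k qs"
  have c: "eq a * ?F = ?F * eq a"
    by (rule foldr_comm) (use Cons.prems in \<open>auto intro: eq_eq_comm\<close>)
  have "eq a * ?F * (eq a * ?F) = eq a * (?F * eq a) * ?F" by (simp add: mult.assoc)
  also have "\<dots> = (eq a * eq a) * (?F * ?F)" by (simp add: c[symmetric] mult.assoc)
  also have "\<dots> = eq a * ?F" using Cons by (simp add: eq_idem)
  finally show ?case by simp
qed

lemma eIq_idem: "finite S \<Longrightarrow> (\<And>k. k \<in> S \<Longrightarrow> 1 \<le> k) \<Longrightarrow> eIq S * eIq S = (eIq S :: 'k::field qs)"
  unfolding eIq_def by (rule foldr_idem) auto

lemma foldr_insort: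
  assumes "\<And>l. l \<in> set ks \<Longrightarrow> l \<noteq> k"
  shows "foldr (\<lambda>k acc. eq k * acc) (insort k ks) 1 = eq k * (foldr (\<lambda>k acc. eq k * acc) ks 1 :: 'k::field qs)"
  using assms
proof (induction ks)
  case Nil then show ?case by simp
next
  case (Cons a ks)
  show ?case
  proof (cases "k \<le> a")
    case True then show ?thesis by simp
  next
    case False
    then have "foldr (\<lambda>k acc. eq k * acc) (insort k (a#ks)) 1 = eq a * (eq k * (foldr (\<lambda>k acc. eq k * acc) ks 1 :: 'k qs))"
      using Cons by simp
    also have "\<dots> = eq k * (eq a * foldr (\<lambda>k acc. eq k * acc) ks 1)"
      using eq_eq_comm[of a k] Cons.prems[of a] by (metis mult.assoc list.set_intros(1))
    finally show ?thesis by simp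
  qed
qed

lemma eIq_insert: "finite S \<Longrightarrow> k \<notin> S \<Longrightarrow> eIq (insert k S) = eq k * (eIq S :: 'k::field qs)"
  unfolding eIq_def
  by (simp add: sorted_list_of_set_insert_remove, subst foldr_insort) auto

definition pe :: "nat \<Rightarrow> nat \<Rightarrow> 'k::field fa" where "pe k = psub pone (pmul (xf k) (yf k))"
definition peI :: "nat set \<Rightarrow> nat \<Rightarrow> 'k::field fa" where
  "peI S = foldr (\<lambda>k acc. pmul (pe k) acc) (sorted_list_of_set S) pone"

lemma pdom_pe: "pdom (pe k)" by (simp add: pe_def pdom_ops pdom_xf pdom_yf)

lemma pdom_foldr: "pdom (foldr (\<lambda>k acc. pmul (pe k) acc) ks pone)"
  by (induction ks) (simp_all add: pdom_ops pdom_pe)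
lemma pdom_peI: "pdom (peI S)" unfolding peI_def by (rule pdom_foldr)

lemma abs_pe: "abs_qs (pe k) = eq k"
  by (simp add: pe_def eq_def abs_sub abs_mul pdom_ops pdom_xf pdom_yf abs_one xq_def yq_def)

lemma abs_peI: "abs_qs (peI S) = eIq S"
proof -
  have "abs_qs (foldr (\<lambda>k acc. pmul (pe k) acc) ks pone) = foldr (\<lambda>k acc. eq k * acc) ks 1" for ks
    by (induction ks) (simp_all add: abs_one abs_mul pdom_pe pdom_foldr abs_pe)
  then show ?thesis by (simp add: peI_def eIq_def)
qed

lemma peI_at: "S \<subseteq> {1..m} \<Longrightarrow> peI S m = jac_eI S"
proof -
  assume S: "S \<subseteq> {1..m}"
  have "set ks \<subseteq> {1..m} \<Longrightarrow> foldr (\<lambda>k acc. pmul (pe k) acc) ks pone m = foldr (\<lambda>i acc. fa_mult (jac_e i) acc) ks fa_one" for ks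
    by (induction ks) (auto simp: pone_def pmul_def pe_def psub_def xf_def yf_def jac_e_def)
  moreover have "set (sorted_list_of_set S) \<subseteq> {1..m}"
    using S finite_subset[OF S] by simp
  ultimately show ?thesis by (simp add: peI_def jac_eI_def)
qed



lemma eq3_refl: "eq3 A A" by (simp add: eq3_def)
lemma eq3_sym: "eq3 A B \<Longrightarrow> eq3 B A" by (simp add: eq3_def)
lemma eq3_trans: "eq3 A B \<Longrightarrow> eq3 B C \<Longrightarrow> eq3 A C" by (simp add: eq3_def)

lemma qmult_eq3: "eq3 P P' \<Longrightarrow> eq3 (qmult A P) (qmult A P')"
  unfolding qmult_def eq3_def by (simp add: sum3)

lemma foldr_eq3: "eq3 P P' \<Longrightarrow> eq3 (foldr qstep es P) (foldr qstep es P')"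
proof (induction es)
  case Nil then show ?case by simp
next
  case (Cons t es)
  then show ?case by (cases t) (simp add: qstep_def qmult_eq3)
qed

definition qI :: "'r::ring_1 m3" where "qI = (\<lambda>i j. if i = j then 1 else 0)"

lemma qmult_qI: "eq3 (qmult A qI) A"
  unfolding eq3_def qmult_def qI_def less3 by (auto simp: sum3)

definition pelem :: "nat \<Rightarrow> nat \<Rightarrow> (nat \<Rightarrow> 'k::field fa) \<Rightarrow> nat \<Rightarrow> nat \<Rightarrow> nat \<Rightarrow> 'k fa" where
  "pelem k l f = (\<lambda>i j. if i = j then pone else if i = k \<and> j = l then f else pzero)"
definition pstep :: "nat \<times> nat \<times> (nat \<Rightarrow> 'k::field fa) \<Rightarrow> (nat \<Rightarrow> nat \<Rightarrow> nat \<Rightarrow> 'k fa) \<Rightarrow> (nat \<Rightarrow> nat \<Rightarrow> nat \<Rightarrow> 'k fa)" where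
  "pstep t P = (case t of (k,l,f) \<Rightarrow> (\<lambda>i j. padd (padd (pmul (pelem k l f i 0) (P 0 j)) (pmul (pelem k l f i 1) (P 1 j))) (pmul (pelem k l f i 2) (P 2 j))))"
definition pI :: "nat \<Rightarrow> nat \<Rightarrow> nat \<Rightarrow> 'k::field fa" where "pI = (\<lambda>i j. if i = j then pone else pzero)"

definition cstep :: "nat \<times> nat \<times> 'k::field fa \<Rightarrow> 'k fmat \<Rightarrow> 'k fmat" where
  "cstep = (\<lambda>(k, l, a) P. mat_mult 3 (elem_mat k l a) P)"

definition cl :: "nat \<Rightarrow> (nat \<times> nat \<times> (nat \<Rightarrow> 'k::field fa)) list \<Rightarrow> (nat \<times> nat \<times> 'k fa) list" where
  "cl m es = map (\<lambda>(k,l,f). (k,l,f m)) es"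

lemma cstep_pstep: "cstep (k,l,f m) (\<lambda>i j. Q i j m) i j = pstep (k,l,f) Q i j m"
proof -
  have e: "elem_mat k l (f m) i q = pelem k l f i q m" for i q
    by (simp add: elem_mat_def pelem_def pone_def pzero_def)
  show ?thesis
    by (rule ext) (simp add: cstep_def pstep_def mat_mult_def sum3 padd_def pmul_def fa_add_def e)
qed

lemma concrete_foldr: "foldr cstep (cl m es) mat_one = (\<lambda>i j. foldr pstep es pI i j m)"
proof (induction es)
  case Nil then show ?case by (rule ext, rule ext) (simp add: cl_def mat_one_def pI_def pone_def pzero_def)
next
  case (Cons t es)
  obtain k l f where t: "t = (k,l,f)" by (cases t)
  have "foldr cstep (cl m (t#es)) mat_one = cstep (k,l,f m) (foldr cstep (cl m es) mat_one)"
    by (simp add: t cl_def)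
  also have "\<dots> = cstep (k,l,f m) (\<lambda>i j. foldr pstep es pI i j m)" by (simp add: Cons.IH)
  also have "\<dots> = (\<lambda>i j. pstep (k,l,f) (foldr pstep es pI) i j m)"
    by (rule ext, rule ext, rule cstep_pstep)
  finally show ?case by (simp add: t)
qed

definition qmap :: "(nat \<times> nat \<times> (nat \<Rightarrow> 'k::field fa)) list \<Rightarrow> (nat \<times> nat \<times> 'k qs) list" where
  "qmap es = map (\<lambda>(k,l,f). (k,l,abs_qs f)) es"

lemma pdom_pelem: "pdom f \<Longrightarrow> pdom (pelem k l f i j)"
  by (simp add: pelem_def pdom_ops)
lemma abs_pelem: "abs_qs (pelem k l f i j) = qelem k l (abs_qs f) i j"
  by (simp add: pelem_def qelem_def abs_one abs_zero)

lemma pstep_abs: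
  assumes "\<And>i j. pdom (Q i j)" "pdom f"
  shows "pdom (pstep (k,l,f) Q i j) \<and> abs_qs (pstep (k,l,f) Q i j) = qstep (k,l,abs_qs f) (\<lambda>i j. abs_qs (Q i j)) i j"
  by (simp add: pstep_def qstep_def qmult_def sum3 pdom_ops pdom_pelem assms abs_add abs_mul abs_pelem)

lemma abstract_foldr:
  assumes "\<And>k l f. (k,l,f) \<in> set es \<Longrightarrow> pdom f"
  shows "(\<forall>i j. pdom (foldr pstep es pI i j)) \<and> (\<lambda>i j. abs_qs (foldr pstep es pI i j)) = foldr qstep (qmap es) qI"
  using assms
proof (induction es)
  case Nil then show ?case by (auto simp: qmap_def pI_def qI_def pdom_ops abs_one abs_zero intro!: ext)
next
  case (Cons t es)
  obtain k l f where t: "t = (k,l,f)" by (cases t)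
  have f: "pdom f" using Cons.prems t by auto
  have IH: "(\<forall>i j. pdom (foldr pstep es pI i j)) \<and> (\<lambda>i j. abs_qs (foldr pstep es pI i j)) = foldr qstep (qmap es) qI"
  proof -
    have "\<And>k l f. (k,l,f) \<in> set es \<Longrightarrow> pdom f" using Cons.prems by auto
    then show ?thesis by (rule Cons.IH)
  qed
  have "foldr qstep (qmap (t#es)) qI = qstep (k,l,abs_qs f) (foldr qstep (qmap es) qI)"
    by (simp add: t qmap_def)
  also have "\<dots> = qstep (k,l,abs_qs f) (\<lambda>i j. abs_qs (foldr pstep es pI i j))" using IH by simp
  finally have e: "foldr qstep (qmap (t#es)) qI = qstep (k,l,abs_qs f) (\<lambda>i j. abs_qs (foldr pstep es pI i j))" .
  have "foldr pstep (t#es) pI = pstep (k,l,f) (foldr pstep es pI)" by (simp add: t)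
  then show ?case using pstep_abs[of "foldr pstep es pI" f k l] IH f e by auto
qed

definition MlP :: "(nat \<Rightarrow> 'k::field fa) \<Rightarrow> _ \<Rightarrow> _ \<Rightarrow> nat \<Rightarrow> nat \<Rightarrow> (nat \<times> nat \<times> (nat \<Rightarrow> 'k fa)) list" where
  "MlP p a b s t = [(s,t,pmul p a),(t,s,pneg (pmul p b)),(s,t,pmul p a),(s,t,pneg p),(t,s,p),(s,t,pneg p)]"
definition MilP :: "(nat \<Rightarrow> 'k::field fa) \<Rightarrow> _ \<Rightarrow> _ \<Rightarrow> nat \<Rightarrow> nat \<Rightarrow> (nat \<times> nat \<times> (nat \<Rightarrow> 'k fa)) list" where
  "MilP p a b s t = [(s,t,p),(t,s,pneg p),(s,t,p),(s,t,pneg (pmul p a)),(t,s,pmul p b),(s,t,pneg (pmul p a))]"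

lemma qmap_Ml: "pdom p \<Longrightarrow> pdom a \<Longrightarrow> pdom b \<Longrightarrow> qmap (MlP p a b s t) = Ml (abs_qs p) (abs_qs a) (abs_qs b) s t"
  by (simp add: qmap_def MlP_def Ml_def abs_mul abs_neg pdom_ops)
lemma qmap_Mil: "pdom p \<Longrightarrow> pdom a \<Longrightarrow> pdom b \<Longrightarrow> qmap (MilP p a b s t) = Mil (abs_qs p) (abs_qs a) (abs_qs b) s t"
  by (simp add: qmap_def MilP_def Mil_def abs_mul abs_neg pdom_ops)

lemma set_MlP: "x \<in> set (MlP p a b s t) \<Longrightarrow> x \<in> {(s,t,pmul p a),(t,s,pneg (pmul p b)),(s,t,pneg p),(t,s,p)}"
  by (auto simp: MlP_def)
lemma set_MilP: "x \<in> set (MilP p a b s t) \<Longrightarrow> x \<in> {(s,t,p),(t,s,pneg p),(s,t,pneg (pmul p a)),(t,s,pmul p b)}"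
  by (auto simp: MilP_def)



theorem theorem3p4:
  fixes m i j :: nat and J :: "nat set"
  assumes "m \<ge> 2" and "J \<subseteq> {1..m}" and "card J \<ge> 2"
    and "i \<in> J" and "j \<in> J" and "i \<noteq> j"
  shows "diag_in_E_inf m (jac_theta i j J :: 'k::field fa)"
proof -
  note JS = assms(2) and iJ = assms(4) and jJ = assms(5) and ij = assms(6)
  have finJ: "finite J" using JS finite_subset by blast
  have i1: "1 \<le> i" and j1: "1 \<le> j" using JS iJ jJ by auto
  define S where "S = J - {i,j}"
  have finS: "finite S" using finJ by (simp add: S_def)
  have S1: "\<And>k. k \<in> S \<Longrightarrow> 1 \<le> k" using JS by (auto simp: S_def)
  define p :: "nat \<Rightarrow> 'k fa" where "p = peI S"
  define P :: "'k qs" where "P = eIq S"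
  have pP: "abs_qs p = P" by (simp add: p_def P_def abs_peI)
  have pdp: "pdom p" by (simp add: p_def pdom_peI)
  define es where "es = MilP p (yf j) (xf j) 0 1 @ MilP p (yf i) (xf i) 0 2 @ MlP p (yf j) (xf j) 0 1 @ MlP p (yf i) (xf i) 0 2"
  have es_set: "\<And>k l f. (k,l,f) \<in> set es \<Longrightarrow> pdom f \<and> k < 3 \<and> l < 3 \<and> k \<noteq> l"
    unfolding es_def using pdp
    by (auto dest!: set_MlP set_MilP simp: pdom_ops pdom_xf pdom_yf)
  have qm: "qmap es = Mil P (yq j) (xq j) 0 1 @ Mil P (yq i) (xq i) 0 2 @ Ml P (yq j) (xq j) 0 1 @ Ml P (yq i) (xq i) 0 2"
  proof -
    have qapp: "qmap (A @ B) = qmap A @ qmap B" for A B by (simp add: qmap_def)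
    show ?thesis unfolding es_def qapp
      by (simp add: qmap_Ml qmap_Mil pdp pdom_xf pdom_yf pP xq_def[symmetric] yq_def[symmetric])
  qed
  have a1: "yq i * xq i = (1::'k qs)" by (rule rel_yx[OF i1])
  have a2: "yq j * xq j = (1::'k qs)" by (rule rel_yx[OF j1])
  have pp: "P * P = P" unfolding P_def by (rule eIq_idem[OF finS S1])
  have Pcx: "z * P = P * z" if "z = xq i \<or> z = yq i \<or> z = xq j \<or> z = yq j" for z
    unfolding P_def
  proof (rule eIq_comm[OF finS])
    fix k assume k: "k \<in> S"
    then have "k \<noteq> i" "k \<noteq> j" by (auto simp: S_def)
    then show "z * eq k = eq k * z" using that x_eq_comm y_eq_comm by metis
  qed
  have c2: "xq j * xq i = xq i * (xq j :: 'k qs)" "xq j * yq i = yq i * (xq j :: 'k qs)"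
           "yq j * xq i = xq i * (yq j :: 'k qs)" "yq j * yq i = yq i * (yq j :: 'k qs)"
    using rel_comm[OF ij] rel_comm[OF ij[symmetric]] by metis+
  have c1: "xq i * P = P * xq i" "yq i * P = P * yq i" "xq j * P = P * xq j" "yq j * P = P * yq j"
    using Pcx by blast+
  have M1: "eq3 (foldr qstep (Ml P (yq i) (xq i) 0 2) Q) (qmult (MM P (yq i) (xq i) 2) Q)"
       and M2: "eq3 (foldr qstep (Mil P (yq i) (xq i) 0 2) Q) (qmult (MMi P (yq i) (xq i) 2) Q)"
       and M3: "eq3 (foldr qstep (Ml P (yq j) (xq j) 0 1) Q) (qmult (MM P (yq j) (xq j) 1) Q)"
       and M4: "eq3 (foldr qstep (Mil P (yq j) (xq j) 0 1) Q) (qmult (MMi P (yq j) (xq j) 1) Q)" for Q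
    using Mgen[OF a1 pp c1(2)[symmetric] c1(1)[symmetric], of 2 Q]
          Mgen[OF a2 pp c1(4)[symmetric] c1(3)[symmetric], of 1 Q] by auto
  define T1 where "T1 = foldr qstep (Ml P (yq i) (xq i) 0 2) qI"
  define T2 where "T2 = foldr qstep (Ml P (yq j) (xq j) 0 1) T1"
  define T3 where "T3 = foldr qstep (Mil P (yq i) (xq i) 0 2) T2"
  define T4 where "T4 = foldr qstep (Mil P (yq j) (xq j) 0 1) T3"
  have T4e: "foldr qstep (qmap es) qI = T4" by (simp add: qm T1_def T2_def T3_def T4_def)
  have e1: "eq3 T1 (MM P (yq i) (xq i) 2)" unfolding T1_def using M1 qmult_qI eq3_trans by blast
  have e2: "eq3 T2 (qmult (MM P (yq j) (xq j) 1) (MM P (yq i) (xq i) 2))"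
    unfolding T2_def by (rule eq3_trans[OF foldr_eq3[OF e1] M3])
  have e3: "eq3 T3 (qmult (MMi P (yq i) (xq i) 2) (qmult (MM P (yq j) (xq j) 1) (MM P (yq i) (xq i) 2)))"
    unfolding T3_def by (rule eq3_trans[OF foldr_eq3[OF e2] M2])
  have e4: "eq3 T4 (qmult (MMi P (yq j) (xq j) 1) (qmult (MMi P (yq i) (xq i) 2) (qmult (MM P (yq j) (xq j) 1) (MM P (yq i) (xq i) 2))))"
    unfolding T4_def by (rule eq3_trans[OF foldr_eq3[OF e3] M4])
  define thq where "thq = (1 + (yq i - 1) * ((1 - xq j*yq j) * P)) * (1 + (xq j - 1) * ((1 - xq i*yq i) * P))"
  have e5: "eq3 T4 (\<lambda>a b. if a = b then (if a = 0 then thq else 1) else 0)"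
    unfolding thq_def
    by (rule eq3_trans[OF e4 final_prod[OF a1 a2 pp c1 c2]])
  define thp :: "nat \<Rightarrow> 'k fa" where "thp = pmul (padd pone (pmul (psub (yf i) pone) (peI (J - {i}))))
      (padd pone (pmul (psub (xf j) pone) (peI (J - {j}))))"
  have pdthp: "pdom thp" by (simp add: thp_def pdom_ops pdom_xf pdom_yf pdom_peI)
  have Ji: "J - {i} = insert j S" and Jj: "J - {j} = insert i S" using iJ jJ ij by (auto simp: S_def)
  have jS: "j \<notin> S" and iS: "i \<notin> S" by (auto simp: S_def)
  have abs_thp: "abs_qs thp = thq"
    by (simp add: thp_def thq_def abs_mul abs_add abs_sub abs_one pdom_ops pdom_xf pdom_yf pdom_peI
        abs_peI Ji Jj eIq_insert[OF finS jS] eIq_insert[OF finS iS] P_def eq_def xq_def yq_def)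
  have thp_m: "thp m = jac_theta i j J"
  proof -
    have "J - {i} \<subseteq> {1..m}" "J - {j} \<subseteq> {1..m}" using JS by auto
    then show ?thesis using JS iJ jJ
      by (auto simp: thp_def jac_theta_def pmul_def padd_def psub_def pone_def peI_at xf_def yf_def)
  qed
  define Tg :: "nat \<Rightarrow> nat \<Rightarrow> nat \<Rightarrow> 'k fa" where "Tg = (\<lambda>a b. if a = b then (if a = 0 then thp else pone) else pzero)"
  have pdTg: "pdom (Tg a b)" for a b by (simp add: Tg_def pdom_ops pdthp)
  have absTg: "abs_qs (Tg a b) = (if a = b then (if a = 0 then thq else 1) else 0)" for a b
    by (simp add: Tg_def abs_thp abs_one abs_zero)
  have AF: "(\<forall>a b. pdom (foldr pstep es pI a b)) \<and> (\<lambda>a b. abs_qs (foldr pstep es pI a b)) = foldr qstep (qmap es) qI"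
    by (rule abstract_foldr) (use es_set in blast)
  have main: "jac_eq m (foldr pstep es pI a b m) (Tg a b m)" if "a < 3" "b < 3" for a b
  proof (rule abs_eqD)
    show "pdom (foldr pstep es pI a b)" using AF by blast
    show "pdom (Tg a b)" by (rule pdTg)
    have "abs_qs (foldr pstep es pI a b) = T4 a b" using AF T4e by metis
    also have "\<dots> = (if a = b then (if a = 0 then thq else 1) else 0)" using e5 that by (simp add: eq3_def)
    finally show "abs_qs (foldr pstep es pI a b) = abs_qs (Tg a b)" by (simp add: absTg)
  qed
  have Tgm: "Tg a b m = diag_first (jac_theta i j J) a b" for a b
    by (simp add: Tg_def diag_first_def thp_m pone_def pzero_def)
  have "in_E_N m 3 (diag_first (jac_theta i j J :: 'k fa))"
    unfolding in_E_N_def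
  proof (intro exI[of _ "cl m es"] conjI allI impI)
    show "\<forall>(k, l, a)\<in>set (cl m es). k < 3 \<and> l < 3 \<and> k \<noteq> l \<and> a \<in> free_alg m"
      using es_set by (auto simp: cl_def pdom_def)
    fix a b :: nat assume ab: "a < 3" "b < 3"
    have "foldr (\<lambda>(k, l, a) P. mat_mult 3 (elem_mat k l a) P) (cl m es) mat_one a b = foldr pstep es pI a b m"
      using concrete_foldr[of m es, unfolded cstep_def] by simp
    then show "jac_eq m (foldr (\<lambda>(k, l, a) P. mat_mult 3 (elem_mat k l a) P) (cl m es) mat_one a b)
                 (diag_first (jac_theta i j J) a b)"
      using main[OF ab] Tgm by simp
  qed
  then show ?thesis unfolding diag_in_E_inf_def by (intro exI[of _ 3]) simp
qed


end
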